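(* Let $f\in X$ and $\alpha\in\mathbb{R}\setminus\{0\}$, and define $h:\mathbb{R}^3\to\mathbb{C}$ by \[ h(x):=(1+|x|)^{-1-\frac i\alpha}f\Big(\frac{|x|-1}{|x|+1}\Big). \] Then $h\in L^4(\mathbb{R}^3)\cap\dot H^1(\mathbb{R}^3)$.
   Context: $X$ is the space of all $f\in C([-1,1])\cap C^1(-1,1)$ (complex valued) such that $y\mapsto(1-y^2)f'(y)$ extends to a continuous function on $[-1,1]$, with norm $\|f\|_X:=\sup_{y\in(-1,1)}(1-y^2)|f'(y)|+\|f\|_{L^\infty(-1,1)}$. For $r\ge0$, $(1+r)^{-1-\frac i\alpha}:=\exp(-(1+\frac i\alpha)\log(1+r))$. *)

theory Defs
  imports "HOL-Analysis.Analysis"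
begin

definition X_space :: "(real \<Rightarrow> complex) set" where
  "X_space = {f. continuous_on {-1..1} f
      \<and> (\<forall>y\<in>{-1<..<1}. f differentiable (at y))
      \<and> continuous_on {-1<..<1} (\<lambda>y. vector_derivative f (at y))
      \<and> (\<exists>g. continuous_on {-1..1} g
             \<and> (\<forall>y\<in>{-1<..<1}. g y = complex_of_real (1 - y\<^sup>2) * vector_derivative f (at y)))}"

text \<open>Infinitely differentiable real functions on R^3 (all iterated partial
  derivatives exist everywhere).\<close>
coinductive smooth3 :: "(real^3 \<Rightarrow> real) \<Rightarrow> bool" where
  "(\<forall>x. f differentiable (at x)) \<Longrightarrow>
   (\<forall>i. smooth3 (\<lambda>x. frechet_derivative f (at x) (axis i 1))) \<Longrightarrow> smooth3 f"

definition test_fun3 :: "(real^3 \<Rightarrow> real) \<Rightarrow> bool" where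
  "test_fun3 \<phi> \<longleftrightarrow> smooth3 \<phi> \<and> compact (closure {x. \<phi> x \<noteq> 0})"

definition Lp3 :: "real \<Rightarrow> (real^3 \<Rightarrow> complex) set" where
  "Lp3 p = {h. h \<in> borel_measurable lborel \<and> integrable lborel (\<lambda>x. norm (h x) powr p)}"

definition Hdot1_3 :: "(real^3 \<Rightarrow> complex) set" where
  "Hdot1_3 = {h. h \<in> borel_measurable lborel
     \<and> (\<forall>K. compact K \<longrightarrow> set_integrable lborel K h)
     \<and> (\<exists>G :: 3 \<Rightarrow> real^3 \<Rightarrow> complex. \<forall>j. G j \<in> Lp3 2
          \<and> (\<forall>\<phi>. test_fun3 \<phi> \<longrightarrow>
               integral\<^sup>L lborel (\<lambda>x. h x * complex_of_real (frechet_derivative \<phi> (at x) (axis j 1)))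
               = - integral\<^sup>L lborel (\<lambda>x. G j x * complex_of_real (\<phi> x))))}"

text \<open>(1+r)^(-1-i/alpha) := exp(-(1+i/alpha) log(1+r)).\<close>
definition cpow_weight :: "real \<Rightarrow> real \<Rightarrow> complex" where
  "cpow_weight \<alpha> r = exp (- (1 + \<i> / complex_of_real \<alpha>) * complex_of_real (ln (1 + r)))"

end

theory Submission
  imports Defs
begin
lemma cw_deriv:
  assumes "\<rho> > -1"
  shows "(cpow_weight \<alpha> has_vector_derivative
     (- (1 + \<i> / complex_of_real \<alpha>)) * complex_of_real (1/(1+\<rho>)) * cpow_weight \<alpha> \<rho>) (at \<rho>)"
proof -
  have "((\<lambda>r. (- (1 + \<i> / complex_of_real \<alpha>)) * complex_of_real (ln (1 + r))) has_vector_derivative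
        (- (1 + \<i> / complex_of_real \<alpha>)) * complex_of_real (1/(1+\<rho>))) (at \<rho>)"
    using assms
    by (intro has_vector_derivative_mult_right has_vector_derivative_of_real) (auto intro!: derivative_eq_intros)
  from field_vector_diff_chain_at[OF this DERIV_exp]
  show ?thesis unfolding cpow_weight_def o_def by (simp add: mult_ac)
qed

lemma cw_norm: "\<rho> > -1 \<Longrightarrow> norm (cpow_weight \<alpha> \<rho>) = 1/(1+\<rho>)"
  unfolding cpow_weight_def norm_exp_eq_Re
  by (simp add: exp_minus field_simps)

definition Hr :: "real \<Rightarrow> (real \<Rightarrow> complex) \<Rightarrow> real \<Rightarrow> complex" where
  "Hr \<alpha> f \<rho> = cpow_weight \<alpha> \<rho> * f ((\<rho>-1)/(\<rho>+1))"

definition Hd :: "real \<Rightarrow> (real \<Rightarrow> complex) \<Rightarrow> real \<Rightarrow> complex" where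
  "Hd \<alpha> f \<rho> = (- (1 + \<i> / complex_of_real \<alpha>)) * complex_of_real (1/(1+\<rho>)) * cpow_weight \<alpha> \<rho> * f ((\<rho>-1)/(\<rho>+1))
     + cpow_weight \<alpha> \<rho> * (complex_of_real (2/(\<rho>+1)^2) * vector_derivative f (at ((\<rho>-1)/(\<rho>+1))))"

lemma y_range: "\<rho> > 0 \<Longrightarrow> (\<rho>-1)/(\<rho>+1) \<in> {-1<..<(1::real)}"
  by (auto simp: field_simps)

lemma y_range0: "\<rho> \<ge> 0 \<Longrightarrow> (\<rho>-1)/(\<rho>+1) \<in> {-1..(1::real)}"
  by (auto simp: field_simps)

context
  fixes f :: "real \<Rightarrow> complex" and \<alpha> :: real
  assumes fX: "f \<in> X_space"
begin

lemma f_cont: "continuous_on {-1..1} f"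
  using fX by (simp add: X_space_def)

lemma f_deriv: "y \<in> {-1<..<1} \<Longrightarrow> (f has_vector_derivative vector_derivative f (at y)) (at y)"
  using fX by (simp add: X_space_def vector_derivative_works)

lemma f'_cont: "continuous_on {-1<..<1} (\<lambda>y. vector_derivative f (at y))"
  using fX by (simp add: X_space_def)

lemma Hr_deriv:
  assumes "\<rho> > 0"
  shows "(Hr \<alpha> f has_vector_derivative Hd \<alpha> f \<rho>) (at \<rho>)"
proof -
  have y: "((\<lambda>r. (r-1)/(r+1)) has_real_derivative 2/(\<rho>+1)^2) (at \<rho>)"
    using assms by (auto intro!: derivative_eq_intros simp: field_simps power2_eq_square)
  have fy: "((\<lambda>r. f ((r-1)/(r+1))) has_vector_derivative 
      (2/(\<rho>+1)^2) *\<^sub>R vector_derivative f (at ((\<rho>-1)/(\<rho>+1)))) (at \<rho>)"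
    using vector_diff_chain_at[OF y[unfolded has_real_derivative_iff_has_vector_derivative] f_deriv[OF y_range[OF assms]]]
    by (simp add: o_def)
  have w: "(cpow_weight \<alpha> has_vector_derivative
     (- (1 + \<i> / complex_of_real \<alpha>)) * complex_of_real (1/(1+\<rho>)) * cpow_weight \<alpha> \<rho>) (at \<rho>)"
    using cw_deriv assms by simp
  from has_vector_derivative_mult[OF w fy]
  show ?thesis unfolding Hr_def[abs_def] Hd_def
    by (simp add: scaleR_conv_of_real algebra_simps)
qed

lemma Hr_cont: "continuous_on {0..} (Hr \<alpha> f)"
proof -
  have c1: "continuous_on {0..} (cpow_weight \<alpha>)"
    unfolding cpow_weight_def by (auto intro!: continuous_intros)
  have c2: "continuous_on {0..} (\<lambda>r::real. f ((r-1)/(r+1)))"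
    by (rule continuous_on_compose2[OF f_cont]) (auto intro!: continuous_intros simp: field_simps)
  show ?thesis unfolding Hr_def[abs_def] using c1 c2 by (intro continuous_intros)
qed

lemma Hd_cont: "continuous_on {0<..} (Hd \<alpha> f)"
proof -
  have c1: "continuous_on {0<..} (cpow_weight \<alpha>)"
    unfolding cpow_weight_def by (auto intro!: continuous_intros)
  have c2: "continuous_on {0<..} (\<lambda>r::real. f ((r-1)/(r+1)))"
    by (rule continuous_on_compose2[OF f_cont]) (auto intro!: continuous_intros simp: field_simps)
  have c3: "continuous_on {0<..} (\<lambda>r::real. vector_derivative f (at ((r-1)/(r+1))))"
    by (rule continuous_on_compose2[OF f'_cont]) (auto intro!: continuous_intros simp: field_simps)
  show ?thesis unfolding Hd_def[abs_def] using c1 c2 c3 by (intro continuous_intros) auto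
qed

lemma Hr_bound: "\<exists>M\<ge>0. \<forall>\<rho>\<ge>0. norm (Hr \<alpha> f \<rho>) \<le> M"
proof -
  obtain M where M: "\<forall>y\<in>{-1..1}. norm (f y) \<le> M"
    using compact_imp_bounded[OF compact_continuous_image[OF f_cont compact_Icc]]
    by (auto simp: bounded_iff)
  have "norm (Hr \<alpha> f \<rho>) \<le> M" if "\<rho> \<ge> 0" for \<rho>
  proof -
    have "norm (Hr \<alpha> f \<rho>) = 1/(1+\<rho>) * norm (f ((\<rho>-1)/(\<rho>+1)))"
      unfolding Hr_def norm_mult using cw_norm[of \<rho> \<alpha>] that by simp
    also have "\<dots> \<le> 1 * M"
      using M y_range0[OF that] that
      by (intro mult_mono) auto
    finally show ?thesis by simp
  qed
  moreover have "M \<ge> 0" using M[rule_format, of 0] norm_ge_zero[of "f 0"] by (simp del: norm_ge_zero)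
  ultimately show ?thesis by blast
qed

lemma Hd_bound: "\<exists>A\<ge>0. \<forall>\<rho>>0. norm (Hd \<alpha> f \<rho>) \<le> A / (\<rho> * (1+\<rho>))"
proof -
  obtain M where M: "\<forall>y\<in>{-1..1}. norm (f y) \<le> M"
    using compact_imp_bounded[OF compact_continuous_image[OF f_cont compact_Icc]]
    by (auto simp: bounded_iff)
  obtain g where g: "continuous_on {-1..1} g"
      "\<forall>y\<in>{-1<..<1}. g y = complex_of_real (1 - y\<^sup>2) * vector_derivative f (at y)"
    using fX by (auto simp: X_space_def)
  obtain Mg where Mg: "\<forall>y\<in>{-1..1}. norm (g y) \<le> Mg"
    using compact_imp_bounded[OF compact_continuous_image[OF g(1) compact_Icc]]
    by (auto simp: bounded_iff)
  define c where "c = norm (- (1 + \<i> / complex_of_real \<alpha>))"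
  have M0: "M \<ge> 0" using M[rule_format, of 0] norm_ge_zero[of "f 0"] by (simp del: norm_ge_zero)
  have Mg0: "Mg \<ge> 0" using Mg[rule_format, of 0] norm_ge_zero[of "g 0"] by (simp del: norm_ge_zero)
  have c0: "c \<ge> 0" by (simp add: c_def)
  have "norm (Hd \<alpha> f \<rho>) \<le> (c*M + Mg) / (\<rho> * (1+\<rho>))" if "\<rho> > 0" for \<rho>
  proof -
    define y where "y = (\<rho>-1)/(\<rho>+1)"
    have yr: "y \<in> {-1<..<1}" using y_range[OF that] by (simp add: y_def)
    have omy: "1 - y^2 = 4*\<rho>/(\<rho>+1)^2"
    proof -
      have "1 - y^2 = ((\<rho>+1)^2 - (\<rho>-1)^2)/(\<rho>+1)^2"
        using that unfolding y_def by (simp add: power_divide diff_divide_distrib[symmetric] del: diff_divide_distrib) (simp add: divide_simps)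
      also have "\<dots> = 4*\<rho>/(\<rho>+1)^2" by (simp add: power2_eq_square algebra_simps)
      finally show ?thesis .
    qed
    have f'y: "vector_derivative f (at y) = g y / complex_of_real (1 - y^2)"
    proof -
      have e: "g y = complex_of_real (1-y^2) * vector_derivative f (at y)" using g(2) yr by blast
      have "1 - y^2 \<noteq> 0" using omy that by simp
      then have "complex_of_real (1-y^2) \<noteq> 0" by (metis of_real_eq_0_iff)
      with e show ?thesis by (metis nonzero_mult_div_cancel_left)
    qed
    have n1: "norm ((- (1 + \<i> / complex_of_real \<alpha>)) * complex_of_real (1/(1+\<rho>)) * cpow_weight \<alpha> \<rho> * f y)
        \<le> c * M / (1+\<rho>)^2"
    proof -
      have "norm ((- (1 + \<i> / complex_of_real \<alpha>)) * complex_of_real (1/(1+\<rho>)) * cpow_weight \<alpha> \<rho> * f y)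
          = c * (1/(1+\<rho>)) * (1/(1+\<rho>)) * norm (f y)"
        unfolding norm_mult c_def norm_of_real using cw_norm[of \<rho> \<alpha>] that by simp
      also have "\<dots> \<le> c * (1/(1+\<rho>)) * (1/(1+\<rho>)) * M"
        using M yr c0 that by (intro mult_left_mono) auto
      finally show ?thesis by (simp add: power2_eq_square)
    qed
    have n2: "norm (cpow_weight \<alpha> \<rho> * (complex_of_real (2/(\<rho>+1)^2) * vector_derivative f (at y)))
        \<le> Mg / (2*\<rho>*(1+\<rho>))"
    proof -
      have "norm (cpow_weight \<alpha> \<rho> * (complex_of_real (2/(\<rho>+1)^2) * vector_derivative f (at y)))
           = norm (g y) / (2*\<rho>*(1+\<rho>))"
      proof -
        have wn: "norm (cpow_weight \<alpha> \<rho>) = 1/(1+\<rho>)" using cw_norm that by simp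
        have "norm (cpow_weight \<alpha> \<rho> * (complex_of_real (2/(\<rho>+1)^2) * vector_derivative f (at y)))
           = 1/(1+\<rho>) * (2/(\<rho>+1)^2 * (norm (g y) / (4*\<rho>/(\<rho>+1)^2)))"
          unfolding norm_mult f'y norm_divide norm_of_real wn omy using that by simp
        also have "\<dots> = norm (g y) / (2*\<rho>*(1+\<rho>))"
          using that by (simp add: divide_simps power2_eq_square)
        finally show ?thesis .
      qed
      also have "\<dots> \<le> Mg / (2*\<rho>*(1+\<rho>))"
        using Mg yr that by (intro divide_right_mono) auto
      finally show ?thesis .
    qed
    have "norm (Hd \<alpha> f \<rho>) \<le> c * M / (1+\<rho>)^2 + Mg / (2*\<rho>*(1+\<rho>))"
      unfolding Hd_def y_def[symmetric] using n1 n2 norm_triangle_le add_mono by blast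
    also have "c * M / (1+\<rho>)^2 \<le> c * M / (\<rho>*(1+\<rho>))"
      using that c0 M0 by (intro divide_left_mono) (auto simp: power2_eq_square intro!: mult_right_mono)
    also have "Mg / (2*\<rho>*(1+\<rho>)) \<le> Mg / (\<rho>*(1+\<rho>))"
      using that Mg0 by (intro divide_left_mono) (auto intro!: mult_pos_pos)
    finally show ?thesis by (simp add: add_divide_distrib)
  qed
  moreover have "c*M + Mg \<ge> 0" using c0 M0 Mg0 by simp
  ultimately show ?thesis by blast
qed

end

definition rhoe :: "real \<Rightarrow> real^3 \<Rightarrow> real" where
  "rhoe \<epsilon> x = sqrt ((x \<bullet> x) + \<epsilon>^2)"

lemma rhoe_pos: "\<epsilon> > 0 \<Longrightarrow> rhoe \<epsilon> x > 0"
  unfolding rhoe_def by (intro real_sqrt_gt_zero add_nonneg_pos) auto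

lemma rhoe_ge_eps: "\<epsilon> > 0 \<Longrightarrow> rhoe \<epsilon> x \<ge> \<epsilon>"
  unfolding rhoe_def by (rule real_le_rsqrt) auto

lemma rhoe_ge_norm: "rhoe \<epsilon> x \<ge> norm x"
  unfolding rhoe_def norm_eq_sqrt_inner by (rule real_sqrt_le_mono) auto

lemma rhoe_cont: "continuous_on UNIV (rhoe \<epsilon>)"
  unfolding rhoe_def by (intro continuous_intros)

lemma rhoe_line_deriv:
  assumes "\<epsilon> > 0"
  shows "((\<lambda>s. rhoe \<epsilon> (x + s *\<^sub>R e)) has_real_derivative ((x + s *\<^sub>R e) \<bullet> e) / rhoe \<epsilon> (x + s *\<^sub>R e)) (at s)"
proof -
  have p: "((\<lambda>s. (x + s *\<^sub>R e) \<bullet> (x + s *\<^sub>R e) + \<epsilon>^2) has_real_derivative 2 * ((x + s *\<^sub>R e) \<bullet> e)) (at s)"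
    by (auto intro!: derivative_eq_intros simp: inner_commute algebra_simps)
  have "0 < (x + s *\<^sub>R e) \<bullet> (x + s *\<^sub>R e) + \<epsilon>^2"
    using assms by (intro add_nonneg_pos) auto
  from DERIV_chain2[OF DERIV_real_sqrt[OF this] p]
  show ?thesis unfolding rhoe_def by (simp add: field_simps)
qed

lemma rhoe_tendsto: "((\<lambda>\<epsilon>. rhoe \<epsilon> x) \<longlongrightarrow> norm x) (at 0)"
proof -
  have "((\<lambda>\<epsilon>. rhoe \<epsilon> x) \<longlongrightarrow> sqrt ((x \<bullet> x) + 0^2)) (at 0)"
    unfolding rhoe_def by (intro tendsto_intros)
  then show ?thesis by (simp add: norm_eq_sqrt_inner)
qed

definition ue :: "real \<Rightarrow> (real \<Rightarrow> complex) \<Rightarrow> real \<Rightarrow> real^3 \<Rightarrow> complex" where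
  "ue \<alpha> f \<epsilon> x = Hr \<alpha> f (rhoe \<epsilon> x)"

definition due :: "real \<Rightarrow> (real \<Rightarrow> complex) \<Rightarrow> real \<Rightarrow> real^3 \<Rightarrow> real^3 \<Rightarrow> complex" where
  "due \<alpha> f \<epsilon> e x = ((x \<bullet> e) / rhoe \<epsilon> x) *\<^sub>R Hd \<alpha> f (rhoe \<epsilon> x)"

definition Gf :: "real \<Rightarrow> (real \<Rightarrow> complex) \<Rightarrow> real^3 \<Rightarrow> real^3 \<Rightarrow> complex" where
  "Gf \<alpha> f e x = ((x \<bullet> e) / norm x) *\<^sub>R Hd \<alpha> f (norm x)"

definition Dfun :: "real^3 \<Rightarrow> real" where
  "Dfun x = 1 / (norm x * (1 + norm x))"

definition epsn :: "nat \<Rightarrow> real" where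
  "epsn n = inverse (real (Suc n))"

lemma epsn_pos: "epsn n > 0" by (simp add: epsn_def)
lemma epsn_tendsto: "epsn \<longlonglongrightarrow> 0"
  unfolding epsn_def by (rule LIMSEQ_inverse_real_of_nat)

lemma Dfun_nonneg: "Dfun x \<ge> 0" by (simp add: Dfun_def)

context
  fixes f :: "real \<Rightarrow> complex" and \<alpha> :: real
  assumes fX: "f \<in> X_space"
begin

lemma ue_line_deriv:
  assumes "\<epsilon> > 0"
  shows "((\<lambda>s. ue \<alpha> f \<epsilon> (x + s *\<^sub>R e)) has_vector_derivative due \<alpha> f \<epsilon> e (x + s *\<^sub>R e)) (at s)"
proof -
  have r: "((\<lambda>s. rhoe \<epsilon> (x + s *\<^sub>R e)) has_vector_derivative ((x + s *\<^sub>R e) \<bullet> e) / rhoe \<epsilon> (x + s *\<^sub>R e)) (at s)"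
    using rhoe_line_deriv[OF assms] by (simp add: has_real_derivative_iff_has_vector_derivative)
  from vector_diff_chain_at[OF r Hr_deriv[OF fX rhoe_pos[OF assms]]]
  show ?thesis unfolding ue_def[abs_def] due_def o_def .
qed

lemma ue_cont: "\<epsilon> > 0 \<Longrightarrow> continuous_on UNIV (ue \<alpha> f \<epsilon>)"
  unfolding ue_def[abs_def]
  by (rule continuous_on_compose2[OF Hr_cont[OF fX] rhoe_cont]) (auto intro: less_imp_le rhoe_pos)

lemma due_cont: "\<epsilon> > 0 \<Longrightarrow> continuous_on UNIV (due \<alpha> f \<epsilon> e)"
proof -
  assume e: "\<epsilon> > 0"
  have "continuous_on UNIV (\<lambda>x. Hd \<alpha> f (rhoe \<epsilon> x))"
    by (rule continuous_on_compose2[OF Hd_cont[OF fX] rhoe_cont]) (auto intro: rhoe_pos[OF e])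
  moreover have "continuous_on UNIV (\<lambda>x. (x \<bullet> e) / rhoe \<epsilon> x)"
  proof -
    have nz: "\<And>x. rhoe \<epsilon> x \<noteq> 0" using rhoe_pos[OF e] by (metis less_irrefl)
    show ?thesis using rhoe_cont[of \<epsilon>] nz by (intro continuous_intros) auto
  qed
  ultimately show ?thesis unfolding due_def[abs_def] by (rule continuous_on_scaleR[rotated])
qed

lemma h_cont: "continuous_on UNIV (\<lambda>x::real^3. Hr \<alpha> f (norm x))"
  by (rule continuous_on_compose2[OF Hr_cont[OF fX]]) (auto intro!: continuous_intros)

lemma ue_bound: "\<exists>M\<ge>0. \<forall>\<epsilon>>0. \<forall>x. norm (ue \<alpha> f \<epsilon> x) \<le> M \<and> norm (Hr \<alpha> f (norm x)) \<le> M"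
proof -
  obtain M where M: "M \<ge> 0" "\<forall>\<rho>\<ge>0. norm (Hr \<alpha> f \<rho>) \<le> M" using Hr_bound[OF fX] by blast
  show ?thesis unfolding ue_def using M rhoe_pos by (intro exI[of _ M]) (auto simp: less_imp_le)
qed

lemma due_bound:
  assumes "norm e \<le> 1"
  shows "\<exists>A\<ge>0. \<forall>\<epsilon>>0. \<forall>x. norm (due \<alpha> f \<epsilon> e x) \<le> A / (\<epsilon> * (1+\<epsilon>)) \<and>
      norm (due \<alpha> f \<epsilon> e x) \<le> A * Dfun x \<and> norm (Gf \<alpha> f e x) \<le> A * Dfun x"
proof -
  obtain A where A: "A \<ge> 0" "\<forall>\<rho>>0. norm (Hd \<alpha> f \<rho>) \<le> A / (\<rho> * (1+\<rho>))" using Hd_bound[OF fX] by blast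
  have ie: "\<bar>x \<bullet> e\<bar> \<le> norm x" for x
    using Cauchy_Schwarz_ineq2[of x e] assms mult_left_mono[OF assms, of "norm x"] by simp
  have key: "norm ((x \<bullet> e / \<rho>) *\<^sub>R Hd \<alpha> f \<rho>) \<le> A / (\<rho> * (1+\<rho>))" if "\<rho> > 0" "norm x \<le> \<rho>" for x \<rho>
  proof -
    have "norm ((x \<bullet> e / \<rho>) *\<^sub>R Hd \<alpha> f \<rho>) = (\<bar>x \<bullet> e\<bar> / \<rho>) * norm (Hd \<alpha> f \<rho>)"
      using that by simp
    also have "\<dots> \<le> 1 * (A / (\<rho> * (1+\<rho>)))"
      using that ie[of x] A by (intro mult_mono) auto
    finally show ?thesis by simp
  qed
  have mono: "A / (\<rho> * (1+\<rho>)) \<le> A / (r * (1+r))" if "0 < r" "r \<le> \<rho>" for r \<rho>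
    using that A(1) by (intro divide_left_mono mult_mono) (auto intro!: mult_pos_pos)
  have "norm (due \<alpha> f \<epsilon> e x) \<le> A / (\<epsilon> * (1+\<epsilon>)) \<and>
      norm (due \<alpha> f \<epsilon> e x) \<le> A * Dfun x \<and> norm (Gf \<alpha> f e x) \<le> A * Dfun x" if "\<epsilon> > 0" for \<epsilon> x
  proof (intro conjI)
    have k: "norm (due \<alpha> f \<epsilon> e x) \<le> A / (rhoe \<epsilon> x * (1 + rhoe \<epsilon> x))"
      unfolding due_def using key rhoe_pos[OF that] rhoe_ge_norm by blast
    show "norm (due \<alpha> f \<epsilon> e x) \<le> A / (\<epsilon> * (1+\<epsilon>))"
      using k mono[OF that rhoe_ge_eps[OF that, of x]] by linarith
    show "norm (due \<alpha> f \<epsilon> e x) \<le> A * Dfun x"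
    proof (cases "x = 0")
      case True then show ?thesis by (simp add: due_def Dfun_def)
    next
      case False
      then show ?thesis using k mono[of "norm x" "rhoe \<epsilon> x"] rhoe_ge_norm[of x \<epsilon>]
        by (simp add: Dfun_def)
    qed
    show "norm (Gf \<alpha> f e x) \<le> A * Dfun x"
    proof (cases "x = 0")
      case True then show ?thesis by (simp add: Gf_def Dfun_def)
    next
      case False
      then show ?thesis using key[of "norm x" x] by (simp add: Gf_def Dfun_def)
    qed
  qed
  with A(1) show ?thesis by blast
qed

lemma rhoe_seq: "(\<lambda>n. rhoe (epsn n) x) \<longlonglongrightarrow> norm x"
proof -
  have "(\<lambda>n. sqrt ((x \<bullet> x) + (epsn n)^2)) \<longlonglongrightarrow> sqrt ((x \<bullet> x) + 0^2)"
    by (intro tendsto_intros epsn_tendsto)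
  then show ?thesis by (simp add: rhoe_def norm_eq_sqrt_inner)
qed

lemma ue_tendsto: "(\<lambda>n. ue \<alpha> f (epsn n) x) \<longlonglongrightarrow> Hr \<alpha> f (norm x)"
  unfolding ue_def
  by (rule continuous_on_tendsto_compose[OF Hr_cont[OF fX] rhoe_seq])
     (auto intro!: always_eventually less_imp_le rhoe_pos epsn_pos)

lemma due_tendsto: "(\<lambda>n. due \<alpha> f (epsn n) e x) \<longlonglongrightarrow> Gf \<alpha> f e x"
proof (cases "x = 0")
  case True then show ?thesis by (simp add: due_def Gf_def)
next
  case False
  have "(\<lambda>n. Hd \<alpha> f (rhoe (epsn n) x)) \<longlonglongrightarrow> Hd \<alpha> f (norm x)"
    by (rule continuous_on_tendsto_compose[OF Hd_cont[OF fX] rhoe_seq])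
       (use False in \<open>auto intro!: always_eventually rhoe_pos epsn_pos\<close>)
  moreover have "(\<lambda>n. (x \<bullet> e) / rhoe (epsn n) x) \<longlonglongrightarrow> (x \<bullet> e) / norm x"
    using False by (intro tendsto_intros rhoe_seq) auto
  ultimately show ?thesis unfolding due_def Gf_def by (rule tendsto_scaleR[rotated])
qed

end

lemma vd_quot:
  fixes g :: "real \<Rightarrow> 'a::real_normed_vector"
  assumes "(g has_vector_derivative D) (at 0)"
  shows "((\<lambda>s. (1/s) *\<^sub>R (g s - g 0)) \<longlongrightarrow> D) (at 0)"
proof -
  have "((\<lambda>y. (1 / norm (y - 0)) *\<^sub>R (g y - (g 0 + (y - 0) *\<^sub>R D))) \<longlongrightarrow> 0) (at 0)"
    using assms unfolding has_vector_derivative_def has_derivative_within by simp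
  then have l: "((\<lambda>y. norm ((1 / norm (y - 0)) *\<^sub>R (g y - (g 0 + (y - 0) *\<^sub>R D)))) \<longlongrightarrow> 0) (at 0)"
    by (rule tendsto_norm_zero)
  have ev: "\<forall>\<^sub>F y in at (0::real). norm ((1 / norm (y - 0)) *\<^sub>R (g y - (g 0 + (y - 0) *\<^sub>R D))) = norm ((1/y) *\<^sub>R (g y - g 0) - D)"
    unfolding eventually_at_filter
  proof (intro always_eventually allI impI)
    fix y :: real assume "y \<noteq> 0"
    then have "(1/y) *\<^sub>R (g y - g 0) - D = (1/y) *\<^sub>R (g y - (g 0 + y *\<^sub>R D))"
      by (simp add: algebra_simps)
    then show "norm ((1 / norm (y - 0)) *\<^sub>R (g y - (g 0 + (y - 0) *\<^sub>R D))) = norm ((1/y) *\<^sub>R (g y - g 0) - D)"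
      by simp
  qed
  have "((\<lambda>y. norm ((1/y) *\<^sub>R (g y - g 0) - D)) \<longlongrightarrow> 0) (at 0)"
    using Lim_transform_eventually[OF l ev] .
  then have "((\<lambda>y. (1/y) *\<^sub>R (g y - g 0) - D) \<longlongrightarrow> 0) (at 0)"
    by (rule tendsto_norm_zero_cancel)
  then show ?thesis by (rule LIM_zero_cancel)
qed

lemma int_cs:
  fixes F :: "real^3 \<Rightarrow> 'b::{banach, second_countable_topology}"
  assumes "continuous_on UNIV F" "compact S" "\<And>x. x \<notin> S \<Longrightarrow> F x = 0"
  shows "integrable lborel F"
proof -
  have "integrable lborel (\<lambda>x. indicator S x *\<^sub>R F x)"
    using assms by (intro borel_integrable_compact) (auto intro: continuous_on_subset)
  moreover have "(\<lambda>x. indicator S x *\<^sub>R F x) = F"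
    using assms(3) by (auto simp: indicator_def)
  ultimately show ?thesis by simp
qed

lemma integral_translate:
  fixes F :: "real^3 \<Rightarrow> 'b::{banach, second_countable_topology}"
  assumes "F \<in> borel_measurable borel"
  shows "integral\<^sup>L lborel F = integral\<^sup>L lborel (\<lambda>x. F (c + x))"
proof -
  have "integral\<^sup>L lborel F = integral\<^sup>L (distr lborel borel ((+) c)) F"
    by (simp add: lborel_distr_plus)
  also have "\<dots> = integral\<^sup>L lborel (\<lambda>x. F (c + x))"
    using assms by (intro integral_distr) auto
  finally show ?thesis .
qed

lemma bound_compact:
  fixes F :: "real^3 \<Rightarrow> 'b::real_normed_vector"
  assumes "continuous_on UNIV F" "compact K" "\<And>x. x \<notin> K \<Longrightarrow> F x = 0"
  obtains B where "B \<ge> 0" "\<And>x. norm (F x) \<le> B"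
proof -
  have "bounded (F ` K)"
    using assms by (intro compact_imp_bounded compact_continuous_image) (auto intro: continuous_on_subset)
  then obtain B where B: "\<forall>y\<in>F ` K. norm y \<le> B" by (auto simp: bounded_iff)
  have "norm (F x) \<le> max B 0" for x
    using B assms(3)[of x] by (cases "x \<in> K") auto
  then show ?thesis using that[of "max B 0"] by auto
qed

lemma line_mvt:
  fixes g :: "real \<Rightarrow> 'a::real_inner"
  assumes d: "\<And>s. (g has_vector_derivative dg s) (at s)" and B: "\<And>s. norm (dg s) \<le> B"
  shows "norm (g b - g a) \<le> B * \<bar>b - a\<bar>"
proof -
  have main: "norm (g y - g x) \<le> B * \<bar>y - x\<bar>" if xy: "x < y" for x y
  proof -
    have "continuous_on {x..y} g"
      using d by (intro continuous_at_imp_continuous_on ballI has_vector_derivative_continuous) blast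
    moreover have "(g has_derivative (\<lambda>h. h *\<^sub>R dg z)) (at z)" for z
      using d[of z] by (simp add: has_vector_derivative_def)
    ultimately obtain z where "norm (g y - g x) \<le> norm ((y - x) *\<^sub>R dg z)"
      using mvt_general[OF xy, of g "\<lambda>z h. h *\<^sub>R dg z"] by blast
    also have "\<dots> = \<bar>y - x\<bar> * norm (dg z)" by simp
    also have "\<dots> \<le> \<bar>y - x\<bar> * B" by (intro mult_left_mono B) auto
    finally show ?thesis by (simp add: mult.commute)
  qed
  show ?thesis
  proof (cases a b rule: linorder_cases)
    case less then show ?thesis using main by blast
  next
    case equal then show ?thesis by simp
  next
    case greater then show ?thesis using main[OF greater] by (simp add: norm_minus_commute abs_minus_commute)
  qed
qed

lemma ibp_line:
  fixes u du :: "real^3 \<Rightarrow> complex" and \<phi> d\<phi> :: "real^3 \<Rightarrow> real" and e :: "real^3"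
  assumes cu: "continuous_on UNIV u" and cdu: "continuous_on UNIV du"
    and Mu: "\<And>x. norm (u x) \<le> M" and Bdu: "\<And>x. norm (du x) \<le> B"
    and du: "\<And>x s. ((\<lambda>s. u (x + s *\<^sub>R e)) has_vector_derivative du (x + s *\<^sub>R e)) (at s)"
    and c\<phi>: "continuous_on UNIV \<phi>" and cd\<phi>: "continuous_on UNIV d\<phi>"
    and K: "compact K" and \<phi>0: "\<And>x. x \<notin> K \<Longrightarrow> \<phi> x = 0" and d\<phi>0: "\<And>x. x \<notin> K \<Longrightarrow> d\<phi> x = 0"
    and d\<phi>: "\<And>x s. ((\<lambda>s. \<phi> (x + s *\<^sub>R e)) has_real_derivative d\<phi> (x + s *\<^sub>R e)) (at s)"
  shows "integral\<^sup>L lborel (\<lambda>x. u x * complex_of_real (d\<phi> x)) =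
         - integral\<^sup>L lborel (\<lambda>x. du x * complex_of_real (\<phi> x))"
proof -
  obtain B\<phi> where B\<phi>: "B\<phi> \<ge> 0" "\<And>x. norm (d\<phi> x) \<le> B\<phi>"
    using bound_compact[OF cd\<phi> K d\<phi>0] by blast
  define K1 where "K1 = (\<lambda>p. fst p + snd p *\<^sub>R e) ` (K \<times> {-1..1::real})"
  have K1c: "compact K1" unfolding K1_def
    by (intro compact_continuous_image compact_Times K compact_Icc continuous_intros)
  have K1a: "x \<in> K1" if "x + t *\<^sub>R e \<in> K" "\<bar>t\<bar> \<le> 1" for x t
  proof -
    have "x = fst (x + t *\<^sub>R e, -t) + snd (x + t *\<^sub>R e, -t) *\<^sub>R e" by simp
    moreover have "(x + t *\<^sub>R e, -t) \<in> K \<times> {-1..1}" using that by auto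
    ultimately show ?thesis unfolding K1_def by (rule image_eqI)
  qed
  have KK1: "K \<subseteq> K1" using K1a[of _ 0] by auto
  have M0: "M \<ge> 0" using Mu[of 0] norm_ge_zero[of "u 0"] by linarith
  have B0: "B \<ge> 0" using Bdu[of 0] norm_ge_zero[of "du 0"] by linarith
  have cshift: "continuous_on UNIV (\<lambda>x. \<phi> (x + c))" for c
    by (rule continuous_on_compose2[OF c\<phi>]) (auto intro!: continuous_intros)
  have cushift: "continuous_on UNIV (\<lambda>x. u (x + c))" for c
    by (rule continuous_on_compose2[OF cu]) (auto intro!: continuous_intros)
  have cushift2: "continuous_on UNIV (\<lambda>x. u (x - c))" for c
    by (rule continuous_on_compose2[OF cu]) (auto intro!: continuous_intros)
  define L where "L n x = (1/epsn n) *\<^sub>R (u x * complex_of_real (\<phi> (x + epsn n *\<^sub>R e)) - u x * complex_of_real (\<phi> x))" for n x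
  define R where "R n x = (1/epsn n) *\<^sub>R (u (x + (- epsn n) *\<^sub>R e) * complex_of_real (\<phi> x) - u x * complex_of_real (\<phi> x))" for n x
  have eps1: "epsn n \<le> 1" for n by (simp add: epsn_def field_simps)
  have i1: "integrable lborel (\<lambda>x. u x * complex_of_real (\<phi> (x + epsn n *\<^sub>R e)))" for n
  proof (rule int_cs[OF _ K1c])
    show "continuous_on UNIV (\<lambda>x. u x * complex_of_real (\<phi> (x + epsn n *\<^sub>R e)))"
      using cu cshift by (intro continuous_intros) auto
    show "u x * complex_of_real (\<phi> (x + epsn n *\<^sub>R e)) = 0" if "x \<notin> K1" for x
      using K1a[of x "epsn n"] that eps1[of n] epsn_pos[of n] \<phi>0 by auto
  qed
  have i2: "integrable lborel (\<lambda>x. u x * complex_of_real (\<phi> x))"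
    using cu c\<phi> \<phi>0 by (intro int_cs[OF _ K]) (auto intro!: continuous_intros)
  have i3: "integrable lborel (\<lambda>x. u (x + (- epsn n) *\<^sub>R e) * complex_of_real (\<phi> x))" for n
    using cushift cushift2 c\<phi> \<phi>0 by (intro int_cs[OF _ K]) (auto intro!: continuous_intros)
  have tr: "integral\<^sup>L lborel (\<lambda>x. u x * complex_of_real (\<phi> (x + epsn n *\<^sub>R e)))
      = integral\<^sup>L lborel (\<lambda>x. u (x + (- epsn n) *\<^sub>R e) * complex_of_real (\<phi> x))" for n
  proof -
    have "integral\<^sup>L lborel (\<lambda>x. u (x + (- epsn n) *\<^sub>R e) * complex_of_real (\<phi> x))
        = integral\<^sup>L lborel (\<lambda>x. u ((epsn n *\<^sub>R e + x) + (- epsn n) *\<^sub>R e) * complex_of_real (\<phi> (epsn n *\<^sub>R e + x)))"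
      by (rule integral_translate, rule borel_measurable_continuous_onI)
         (use cushift cushift2 c\<phi> in \<open>auto intro!: continuous_intros\<close>)
    also have "\<dots> = integral\<^sup>L lborel (\<lambda>x. u x * complex_of_real (\<phi> (x + epsn n *\<^sub>R e)))"
      by (simp add: algebra_simps)
    finally show ?thesis by simp
  qed
  have LR: "integral\<^sup>L lborel (L n) = integral\<^sup>L lborel (R n)" for n
    unfolding L_def R_def using i1 i2 i3 tr by simp
  have fl: "filterlim epsn (at 0) sequentially"
    by (rule filterlim_atI[OF epsn_tendsto]) (auto intro!: always_eventually simp: epsn_pos less_imp_neq[symmetric])
  have fl': "filterlim (\<lambda>n. - epsn n) (at 0) sequentially"
    using epsn_tendsto[THEN tendsto_minus] epsn_pos
    by (intro filterlim_atI) (auto intro!: always_eventually simp: less_imp_neq[symmetric])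
  have limL: "(\<lambda>n. integral\<^sup>L lborel (L n)) \<longlonglongrightarrow> integral\<^sup>L lborel (\<lambda>x. u x * complex_of_real (d\<phi> x))"
  proof (rule integral_dominated_convergence[where w="\<lambda>x. M * B\<phi> * indicator K1 x"])
    show "(\<lambda>x. u x * complex_of_real (d\<phi> x)) \<in> borel_measurable lborel"
      using cu cd\<phi> by (auto intro!: borel_measurable_continuous_onI continuous_intros)
    show "L n \<in> borel_measurable lborel" for n
      unfolding L_def[abs_def] using cu c\<phi> cshift
      by (auto intro!: borel_measurable_continuous_onI continuous_intros)
    show "integrable lborel (\<lambda>x. M * B\<phi> * indicator K1 x)"
      using K1c by (intro integrable_mult_right integrable_real_indicator)
        (auto intro: emeasure_compact_finite[simplified] borel_closed compact_imp_closed)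
    show "AE x in lborel. (\<lambda>n. L n x) \<longlonglongrightarrow> u x * complex_of_real (d\<phi> x)"
    proof (intro AE_I2)
      fix x
      have "((\<lambda>s. \<phi> (x + s *\<^sub>R e)) has_vector_derivative d\<phi> x) (at 0)"
        using d\<phi>[of x 0] by (simp add: has_real_derivative_iff_has_vector_derivative)
      from filterlim_compose[OF vd_quot[OF this] fl]
      have "(\<lambda>n. (1 / epsn n) *\<^sub>R (\<phi> (x + epsn n *\<^sub>R e) - \<phi> x)) \<longlonglongrightarrow> d\<phi> x" by simp
      then have "(\<lambda>n. u x * complex_of_real ((1 / epsn n) *\<^sub>R (\<phi> (x + epsn n *\<^sub>R e) - \<phi> x)))
                   \<longlonglongrightarrow> u x * complex_of_real (d\<phi> x)"
        by (intro tendsto_intros)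
      moreover have "u x * complex_of_real ((1 / epsn n) *\<^sub>R (\<phi> (x + epsn n *\<^sub>R e) - \<phi> x)) = L n x" for n
        unfolding L_def by (simp add: scaleR_conv_of_real algebra_simps)
      ultimately show "(\<lambda>n. L n x) \<longlonglongrightarrow> u x * complex_of_real (d\<phi> x)" by simp
    qed
    show "AE x in lborel. norm (L n x) \<le> M * B\<phi> * indicator K1 x" for n
    proof (intro AE_I2)
      fix x
      show "norm (L n x) \<le> M * B\<phi> * indicator K1 x"
      proof (cases "x \<in> K1")
        case False
        then have "\<phi> (x + epsn n *\<^sub>R e) = 0" "\<phi> x = 0"
          using K1a[of x "epsn n"] eps1[of n] epsn_pos[of n] \<phi>0 KK1 by auto
        then show ?thesis using False by (simp add: L_def)
      next
        case True
        have mv: "norm (\<phi> (x + epsn n *\<^sub>R e) - \<phi> (x + 0 *\<^sub>R e)) \<le> B\<phi> * \<bar>epsn n - 0\<bar>"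
          by (rule line_mvt[where g="\<lambda>s. \<phi> (x + s *\<^sub>R e)" and dg="\<lambda>s. d\<phi> (x + s *\<^sub>R e)"])
             (use d\<phi> B\<phi> in \<open>auto simp: has_real_derivative_iff_has_vector_derivative\<close>)
        have "L n x = (1 / epsn n) *\<^sub>R (u x * complex_of_real (\<phi> (x + epsn n *\<^sub>R e) - \<phi> x))"
          unfolding L_def by (simp add: algebra_simps)
        then have "norm (L n x) = (1 / epsn n) * (norm (u x) * \<bar>\<phi> (x + epsn n *\<^sub>R e) - \<phi> x\<bar>)"
          using epsn_pos[of n] by (simp add: norm_mult del: of_real_diff)
        also have "\<dots> \<le> (1 / epsn n) * (M * (B\<phi> * epsn n))"
          using mv epsn_pos[of n] Mu[of x] B\<phi>(1) M0
          by (intro mult_left_mono mult_mono) auto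
        also have "\<dots> = M * B\<phi>" using epsn_pos[of n] by simp
        finally show ?thesis using True by simp
      qed
    qed
  qed
  have limR: "(\<lambda>n. integral\<^sup>L lborel (R n)) \<longlonglongrightarrow> integral\<^sup>L lborel (\<lambda>x. - (du x * complex_of_real (\<phi> x)))"
  proof (rule integral_dominated_convergence[where w="\<lambda>x. B * norm (\<phi> x)"])
    show "(\<lambda>x. - (du x * complex_of_real (\<phi> x))) \<in> borel_measurable lborel"
      using cdu c\<phi> by (auto intro!: borel_measurable_continuous_onI continuous_intros)
    show "R n \<in> borel_measurable lborel" for n
    proof -
      have c1: "continuous_on UNIV (\<lambda>x. u (x + (- epsn n) *\<^sub>R e))" by (rule cushift)
      show ?thesis unfolding R_def[abs_def] measurable_lborel2
        by (intro borel_measurable_continuous_onI continuous_on_scaleR continuous_on_diff continuous_on_mult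
           continuous_on_const c1 cu continuous_on_of_real c\<phi>)
    qed
    have "integrable lborel \<phi>" using c\<phi> \<phi>0 by (intro int_cs[OF _ K]) auto
    then show "integrable lborel (\<lambda>x. B * norm (\<phi> x))"
      by (intro integrable_mult_right integrable_norm)
    show "AE x in lborel. (\<lambda>n. R n x) \<longlonglongrightarrow> - (du x * complex_of_real (\<phi> x))"
    proof (intro AE_I2)
      fix x
      have "((\<lambda>s. u (x + s *\<^sub>R e)) has_vector_derivative du x) (at 0)"
        using du[of x 0] by simp
      from filterlim_compose[OF vd_quot[OF this] fl']
      have "(\<lambda>n. (1 / (- epsn n)) *\<^sub>R (u (x + (- epsn n) *\<^sub>R e) - u x)) \<longlonglongrightarrow> du x" by simp
      then have "(\<lambda>n. - ((1 / (- epsn n)) *\<^sub>R (u (x + (- epsn n) *\<^sub>R e) - u x)) * complex_of_real (\<phi> x))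
                   \<longlonglongrightarrow> - du x * complex_of_real (\<phi> x)"
        by (intro tendsto_intros)
      moreover have "- ((1 / (- epsn n)) *\<^sub>R (u (x + (- epsn n) *\<^sub>R e) - u x)) * complex_of_real (\<phi> x) = R n x" for n
        unfolding R_def by (simp add: algebra_simps)
      ultimately show "(\<lambda>n. R n x) \<longlonglongrightarrow> - (du x * complex_of_real (\<phi> x))" by simp
    qed
    show "AE x in lborel. norm (R n x) \<le> B * norm (\<phi> x)" for n
    proof (intro AE_I2)
      fix x
      have mv: "norm (u (x + (- epsn n) *\<^sub>R e) - u (x + 0 *\<^sub>R e)) \<le> B * \<bar>(- epsn n) - 0\<bar>"
        by (rule line_mvt[where g="\<lambda>s. u (x + s *\<^sub>R e)" and dg="\<lambda>s. du (x + s *\<^sub>R e)"])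
           (rule du, rule Bdu)
      have "R n x = ((1 / epsn n) *\<^sub>R (u (x + (- epsn n) *\<^sub>R e) - u x)) * complex_of_real (\<phi> x)"
        unfolding R_def by (simp add: algebra_simps)
      then have "norm (R n x) = (1 / epsn n) * norm (u (x + (- epsn n) *\<^sub>R e) - u x) * norm (\<phi> x)"
        using epsn_pos[of n] by (simp add: norm_mult)
      also have "\<dots> \<le> (1 / epsn n) * (B * epsn n) * norm (\<phi> x)"
        using mv epsn_pos[of n] by (intro mult_right_mono mult_left_mono) simp_all
      also have "\<dots> = B * norm (\<phi> x)" using epsn_pos[of n] by simp
      finally show "norm (R n x) \<le> B * norm (\<phi> x)" .
    qed
  qed
  have "integral\<^sup>L lborel (\<lambda>x. u x * complex_of_real (d\<phi> x)) = integral\<^sup>L lborel (\<lambda>x. - (du x * complex_of_real (\<phi> x)))"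
  proof -
    have "(\<lambda>n. integral\<^sup>L lborel (L n)) = (\<lambda>n. integral\<^sup>L lborel (R n))" using LR by simp
    with limL have "(\<lambda>n. integral\<^sup>L lborel (R n)) \<longlonglongrightarrow> integral\<^sup>L lborel (\<lambda>x. u x * complex_of_real (d\<phi> x))"
      by simp
    from LIMSEQ_unique[OF this limR] show ?thesis .
  qed
  then show ?thesis by simp
qed

lemma smooth3_D:
  assumes "smooth3 \<phi>"
  shows "\<And>x. \<phi> differentiable (at x)" "\<And>i. smooth3 (\<lambda>x. frechet_derivative \<phi> (at x) (axis i 1))"
  using assms by (auto elim: smooth3.cases)

lemma smooth3_cont: "smooth3 \<phi> \<Longrightarrow> continuous_on UNIV \<phi>"
proof -
  assume s: "smooth3 \<phi>"
  have "isCont \<phi> x" for x using smooth3_D(1)[OF s, of x] by (rule differentiable_imp_continuous_within)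
  then show ?thesis by (intro continuous_at_imp_continuous_on) auto
qed

lemma line_deriv_frechet:
  fixes \<phi> :: "real^3 \<Rightarrow> real"
  assumes "\<phi> differentiable (at (x + s *\<^sub>R e))"
  shows "((\<lambda>s. \<phi> (x + s *\<^sub>R e)) has_real_derivative frechet_derivative \<phi> (at (x + s *\<^sub>R e)) e) (at s)"
proof -
  let ?F = "frechet_derivative \<phi> (at (x + s *\<^sub>R e))"
  have d: "(\<phi> has_derivative ?F) (at (x + s *\<^sub>R e))"
    using assms by (simp add: frechet_derivative_works)
  have l: "((\<lambda>s. x + s *\<^sub>R e) has_derivative (\<lambda>h. h *\<^sub>R e)) (at s)"
    by (auto intro!: derivative_eq_intros)
  have c: "((\<lambda>s. \<phi> (x + s *\<^sub>R e)) has_derivative (\<lambda>h. ?F (h *\<^sub>R e))) (at s)"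
    using has_derivative_compose[OF l d] by simp
  have lin: "linear ?F" using has_derivative_bounded_linear[OF d] bounded_linear.linear by blast
  have "(\<lambda>h. ?F (h *\<^sub>R e)) = (\<lambda>h. ?F e * h)"
  proof
    fix h show "?F (h *\<^sub>R e) = ?F e * h" using linear_scale[OF lin, of h e] by (simp only: real_scaleR_def mult.commute)
  qed
  then have eq: "(\<lambda>h. ?F (h *\<^sub>R e)) = (\<lambda>h. ?F e * h)" .
  show ?thesis unfolding has_field_derivative_def using c[unfolded eq] .
qed

lemma test_fun_facts:
  fixes \<phi> :: "real^3 \<Rightarrow> real" and j :: 3
  assumes "test_fun3 \<phi>"
  defines "K \<equiv> closure {x. \<phi> x \<noteq> 0}"
  defines "d\<phi> \<equiv> (\<lambda>x. frechet_derivative \<phi> (at x) (axis j 1))"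
  shows "continuous_on UNIV \<phi>" "continuous_on UNIV d\<phi>" "compact K"
    "\<And>x. x \<notin> K \<Longrightarrow> \<phi> x = 0" "\<And>x. x \<notin> K \<Longrightarrow> d\<phi> x = 0"
    "\<And>x s. ((\<lambda>s. \<phi> (x + s *\<^sub>R axis j 1)) has_real_derivative d\<phi> (x + s *\<^sub>R axis j 1)) (at s)"
proof -
  have sm: "smooth3 \<phi>" using assms(1) unfolding test_fun3_def by (rule conjunct1)
  have cK: "compact K" using assms(1) unfolding test_fun3_def K_def by (rule conjunct2)
  show "continuous_on UNIV \<phi>" by (rule smooth3_cont[OF sm])
  show "continuous_on UNIV d\<phi>" unfolding d\<phi>_def by (rule smooth3_cont[OF smooth3_D(2)[OF sm]])
  show "compact K" by (rule cK)
  have sub: "{x. \<phi> x \<noteq> 0} \<subseteq> K" unfolding K_def by (rule closure_subset)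
  show z: "\<phi> x = 0" if "x \<notin> K" for x
  proof (rule ccontr)
    assume "\<phi> x \<noteq> 0"
    then have "x \<in> K" using sub by blast
    with that show False by contradiction
  qed
  show ld: "((\<lambda>s. \<phi> (x + s *\<^sub>R axis j 1)) has_real_derivative d\<phi> (x + s *\<^sub>R axis j 1)) (at s)" for x s
    unfolding d\<phi>_def by (rule line_deriv_frechet) (rule smooth3_D(1)[OF sm])
  show "d\<phi> x = 0" if xK: "x \<notin> K" for x
  proof -
    have oK: "open (- K)" unfolding K_def by (rule open_Compl) (rule closed_closure)
    have "x \<in> - K" using xK by simp
    then obtain d where d: "d > 0" "ball x d \<subseteq> - K"
      using oK open_contains_ball by blast
    have "\<forall>y. \<bar>0 - y\<bar> < d \<longrightarrow> \<phi> (x + 0 *\<^sub>R axis j 1) = \<phi> (x + y *\<^sub>R axis j 1)"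
    proof (intro allI impI)
      fix y :: real assume y: "\<bar>0 - y\<bar> < d"
      have "dist x (x + y *\<^sub>R axis j 1) = \<bar>y\<bar>" by (simp add: dist_norm)
      then have "x + y *\<^sub>R axis j 1 \<in> ball x d" using y by simp
      then have "x + y *\<^sub>R axis j 1 \<notin> K" using d(2) by blast
      then have "\<phi> (x + y *\<^sub>R axis j 1) = 0" by (rule z)
      moreover have "\<phi> (x + 0 *\<^sub>R axis j 1) = 0" using z[OF xK] by simp
      ultimately show "\<phi> (x + 0 *\<^sub>R axis j 1) = \<phi> (x + y *\<^sub>R axis j 1)" by simp
    qed
    from DERIV_local_const[OF ld[of x 0] d(1) this] show ?thesis by simp
  qed
qed

lemma card_Basis3: "card (Basis :: (real^3) set) = 3"
  by simp

definition qf :: "real \<Rightarrow> real" where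
  "qf t = (\<bar>t\<bar> * (1 + \<bar>t\<bar>)) powr (-2/3)"

definition b0 :: "real \<Rightarrow> real" where
  "b0 t = indicator {0..1} t * t powr (-2/3) + indicator {1..} t * t powr (-4/3)"

lemma b0_nonneg: "b0 t \<ge> 0"
  by (simp add: b0_def)

lemma qf_le_pos: "t > 0 \<Longrightarrow> qf t \<le> b0 t"
proof -
  assume t: "t > 0"
  show ?thesis
  proof (cases "t \<le> 1")
    case True
    have "qf t \<le> t powr (-2/3)"
      unfolding qf_def using t by (intro powr_mono2') (auto simp: algebra_simps)
    moreover have "0 \<le> indicator {1..} t * t powr (-4/3)" by simp
    moreover have "b0 t = t powr (-2/3) + indicator {1..} t * t powr (-4/3)" using True t by (simp add: b0_def)
    ultimately show ?thesis by linarith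
  next
    case False
    have "qf t \<le> (t * t) powr (-2/3)"
      unfolding qf_def using t by (intro powr_mono2') auto
    also have "(t * t) powr (-2/3) = t powr (-4/3)"
      using t by (simp add: powr_mult powr_add[symmetric])
    finally show ?thesis using False t by (simp add: b0_def)
  qed
qed

lemma qf_le: "qf t \<le> b0 t + b0 (-t)"
proof (cases t "0::real" rule: linorder_cases)
  case less
  then have "qf t = qf (-t)" by (simp add: qf_def)
  also have "\<dots> \<le> b0 (-t)" using qf_le_pos[of "-t"] less by simp
  finally show ?thesis using b0_nonneg[of t] by simp
next
  case equal then show ?thesis by (simp add: qf_def b0_def)
next
  case greater then show ?thesis using qf_le_pos[of t] b0_nonneg[of "-t"] by simp
qed

lemma b0_meas[measurable]: "b0 \<in> borel_measurable borel"
  unfolding b0_def by measurable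

lemma qf_meas[measurable]: "qf \<in> borel_measurable borel"
  unfolding qf_def by measurable

lemma nn_b0: "(\<integral>\<^sup>+t. ennreal (b0 t) \<partial>lborel) < \<infinity>"
proof -
  have h1: "((\<lambda>x. x powr (-2/3)) has_integral (1 powr (-2/3+1) / (-2/3+1))) {0..1::real}"
    by (rule has_integral_powr_from_0) auto
  have h2: "((\<lambda>x. x powr (-4/3)) has_integral (-(1 powr (-4/3+1)) / (-4/3+1))) {1::real..}"
    by (rule has_integral_powr_to_inf) auto
  have e1: "(\<integral>\<^sup>+t. ennreal (indicator {0..1} t * t powr (-2/3)) \<partial>lborel) = ennreal (1 powr (-2/3+1) / (-2/3+1))"
    by (rule nn_integral_has_integral_lebesgue[OF _ h1]) auto
  have e2: "(\<integral>\<^sup>+t. ennreal (indicator {1..} t * t powr (-4/3)) \<partial>lborel) = ennreal (-(1 powr (-4/3+1)) / (-4/3+1))"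
    by (rule nn_integral_has_integral_lebesgue[OF _ h2]) auto
  have "(\<integral>\<^sup>+t. ennreal (b0 t) \<partial>lborel) = (\<integral>\<^sup>+t. ennreal (indicator {0..1} t * t powr (-2/3)) + ennreal (indicator {1..} t * t powr (-4/3)) \<partial>lborel)"
    unfolding b0_def by (intro nn_integral_cong) (simp add: ennreal_plus)
  also have "\<dots> = (\<integral>\<^sup>+t. ennreal (indicator {0..1} t * t powr (-2/3)) \<partial>lborel) + (\<integral>\<^sup>+t. ennreal (indicator {1..} t * t powr (-4/3)) \<partial>lborel)"
    by (rule nn_integral_add) auto
  finally show ?thesis using e1 e2 by (simp add: ennreal_plus[symmetric] del: ennreal_plus)
qed

lemma nn_qf: "(\<integral>\<^sup>+t. ennreal (qf t) \<partial>lborel) < \<infinity>"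
proof -
  have "(\<integral>\<^sup>+t. ennreal (qf t) \<partial>lborel) \<le> (\<integral>\<^sup>+t. ennreal (b0 t) + ennreal (b0 (-t)) \<partial>lborel)"
    using qf_le b0_nonneg by (intro nn_integral_mono) (simp add: ennreal_plus[symmetric] del: ennreal_plus)
  also have "\<dots> = (\<integral>\<^sup>+t. ennreal (b0 t) \<partial>lborel) + (\<integral>\<^sup>+t. ennreal (b0 (-t)) \<partial>lborel)"
    by (rule nn_integral_add) auto
  also have "(\<integral>\<^sup>+t. ennreal (b0 (-t)) \<partial>lborel) = (\<integral>\<^sup>+t. ennreal (b0 t) \<partial>lborel)"
  proof -
    have "(\<integral>\<^sup>+t. ennreal (b0 t) \<partial>lborel) = (\<integral>\<^sup>+t. ennreal (b0 t) \<partial>(distr lborel borel uminus))"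
      by (simp add: lborel_distr_uminus)
    also have "\<dots> = (\<integral>\<^sup>+t. ennreal (b0 (-t)) \<partial>lborel)"
      by (rule nn_integral_distr) auto
    finally show ?thesis by simp
  qed
  finally have le: "(\<integral>\<^sup>+t. ennreal (qf t) \<partial>lborel) \<le> (\<integral>\<^sup>+t. ennreal (b0 t) \<partial>lborel) + (\<integral>\<^sup>+t. ennreal (b0 t) \<partial>lborel)" .
  have "(\<integral>\<^sup>+t. ennreal (b0 t) \<partial>lborel) + (\<integral>\<^sup>+t. ennreal (b0 t) \<partial>lborel) < \<infinity>"
    using nn_b0 by (simp add: less_top ennreal_add_eq_top)
  with le show ?thesis by (rule order.strict_trans1)
qed

definition Qf :: "real \<Rightarrow> ennreal" where
  "Qf t = (if t = 0 then \<infinity> else ennreal (qf t))"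

lemma Qf_meas[measurable]: "Qf \<in> borel_measurable borel"
  unfolding Qf_def by measurable

lemma qf_pos: "t \<noteq> 0 \<Longrightarrow> qf t > 0"
  unfolding qf_def by (simp add: abs_if add_pos_pos)

lemma Qf_nz: "Qf t \<noteq> 0"
  using qf_pos[of t] by (cases "t = 0") (auto simp: Qf_def ennreal_eq_0_iff)

lemma nn_Qf: "(\<integral>\<^sup>+t. Qf t \<partial>lborel) < \<infinity>"
proof -
  have "(\<integral>\<^sup>+t. Qf t \<partial>lborel) = (\<integral>\<^sup>+t. ennreal (qf t) \<partial>lborel)"
    by (rule nn_integral_cong_AE) (use AE_lborel_singleton[of 0] in \<open>auto simp: Qf_def elim!: eventually_mono\<close>)
  with nn_qf show ?thesis by simp
qed

lemma Dfun_sq_le: "ennreal ((Dfun x)^2) \<le> (\<Prod>b\<in>Basis. Qf (x \<bullet> b))"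
proof (cases "\<exists>b\<in>Basis. x \<bullet> b = 0")
  case True
  have "(\<Prod>b\<in>Basis. Qf (x \<bullet> b)) = top"
    unfolding ennreal_prod_eq_top using True Qf_nz by (auto simp: Qf_def)
  then show ?thesis by simp
next
  case False
  then have nz: "\<And>b. b \<in> Basis \<Longrightarrow> x \<bullet> b \<noteq> 0" by blast
  then have x0: "x \<noteq> 0" using nonempty_Basis by (metis ex_in_conv inner_zero_left)
  define R where "R = norm x * (1 + norm x)"
  have R0: "R > 0" unfolding R_def using x0 by (simp add: add_pos_pos)
  have "(\<Prod>b\<in>Basis. Qf (x \<bullet> b)) = (\<Prod>b\<in>Basis. ennreal (qf (x \<bullet> b)))"
    using nz by (intro prod.cong) (auto simp: Qf_def)
  also have "\<dots> = ennreal (\<Prod>b\<in>Basis. qf (x \<bullet> b))"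
    by (rule prod_ennreal) (simp add: qf_def)
  finally have eq: "(\<Prod>b\<in>Basis. Qf (x \<bullet> b)) = ennreal (\<Prod>b\<in>Basis. qf (x \<bullet> b))" .
  have "(\<Prod>b\<in>(Basis::(real^3) set). R powr (-2/3)) \<le> (\<Prod>b\<in>Basis. qf (x \<bullet> b))"
  proof (rule prod_mono, intro conjI)
    fix b :: "real^3" assume b: "b \<in> Basis"
    show "0 \<le> R powr (-2/3)" by simp
    have "\<bar>x \<bullet> b\<bar> * (1 + \<bar>x \<bullet> b\<bar>) \<le> R"
      unfolding R_def using Basis_le_norm[OF b, of x] by (intro mult_mono) auto
    moreover have "0 < \<bar>x \<bullet> b\<bar> * (1 + \<bar>x \<bullet> b\<bar>)" using nz[OF b] by (simp add: add_pos_pos)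
    ultimately show "R powr (-2/3) \<le> qf (x \<bullet> b)"
      unfolding qf_def by (intro powr_mono2') auto
  qed
  also have "(\<Prod>b\<in>(Basis::(real^3) set). R powr (-2/3)) = (R powr (-2/3))^3"
    by (simp add: card_Basis3)
  also have "\<dots> = R powr (-2)"
    using R0 by (simp add: powr_power)
  also have "\<dots> = (Dfun x)^2"
    using R0 by (simp add: powr_minus Dfun_def R_def power_one_over inverse_eq_divide)
  finally show ?thesis unfolding eq by (intro ennreal_leI) simp
qed

lemma Dfun_meas[measurable]: "Dfun \<in> borel_measurable borel"
  unfolding Dfun_def by measurable

lemma Dfun_sq_integrable: "integrable lborel (\<lambda>x. (Dfun x)^2)"
proof (rule integrableI_bounded)
  show "(\<lambda>x. (Dfun x)^2) \<in> borel_measurable lborel" by measurable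
  have "(\<integral>\<^sup>+x. ennreal (norm ((Dfun x)^2)) \<partial>lborel) \<le> (\<integral>\<^sup>+x. (\<Prod>b\<in>Basis. Qf ((x::real^3) \<bullet> b)) \<partial>lborel)"
  proof (rule nn_integral_mono)
    fix x :: "real^3"
    show "ennreal (norm ((Dfun x)^2)) \<le> (\<Prod>b\<in>Basis. Qf (x \<bullet> b))"
      using Dfun_sq_le[of x] by simp
  qed
  also have "\<dots> = (\<Prod>b\<in>(Basis::(real^3) set). (\<integral>\<^sup>+t. Qf t \<partial>lborel))"
    by (rule nn_integral_lborel_prod[of "\<lambda>b. Qf"]) auto
  also have "\<dots> < \<infinity>"
    using nn_Qf by (simp add: power_less_top_ennreal)
  finally show "(\<integral>\<^sup>+x. ennreal (norm ((Dfun x)^2)) \<partial>lborel) < \<infinity>" .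
qed

context
  fixes f :: "real \<Rightarrow> complex" and \<alpha> :: real
  assumes fX: "f \<in> X_space"
begin

lemma Hr_decay: "\<exists>M\<ge>0. \<forall>\<rho>\<ge>0. norm (Hr \<alpha> f \<rho>) \<le> M / (1 + \<rho>)"
proof -
  obtain M where M: "\<forall>y\<in>{-1..1}. norm (f y) \<le> M"
    using compact_imp_bounded[OF compact_continuous_image[OF f_cont[OF fX] compact_Icc]]
    by (auto simp: bounded_iff)
  have "norm (Hr \<alpha> f \<rho>) \<le> M / (1 + \<rho>)" if "\<rho> \<ge> 0" for \<rho>
  proof -
    have "norm (Hr \<alpha> f \<rho>) = norm (f ((\<rho>-1)/(\<rho>+1))) / (1+\<rho>)"
      unfolding Hr_def norm_mult using cw_norm[of \<rho> \<alpha>] that by simp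
    also have "\<dots> \<le> M / (1+\<rho>)"
      using M y_range0[OF that] that by (intro divide_right_mono) auto
    finally show ?thesis .
  qed
  moreover have "M \<ge> 0" using M[rule_format, of 0] norm_ge_zero[of "f 0"] by (simp del: norm_ge_zero)
  ultimately show ?thesis by blast
qed

lemma h_Lp4: "(\<lambda>x::real^3. Hr \<alpha> f (norm x)) \<in> Lp3 4"
proof -
  obtain M where M: "M \<ge> 0" "\<forall>\<rho>\<ge>0. norm (Hr \<alpha> f \<rho>) \<le> M / (1 + \<rho>)" using Hr_decay by blast
  have meas: "(\<lambda>x::real^3. Hr \<alpha> f (norm x)) \<in> borel_measurable lborel"
    using h_cont[OF fX] by (simp add: borel_measurable_continuous_onI)
  have eq: "(\<lambda>x::real^3. norm (Hr \<alpha> f (norm x)) powr 4) = (\<lambda>x. norm (Hr \<alpha> f (norm x)) ^ 4)"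
    by simp
  have "integrable lborel (\<lambda>x::real^3. norm (Hr \<alpha> f (norm x)) ^ 4)"
  proof (rule Bochner_Integration.integrable_bound[where f="\<lambda>x. M^4 * (Dfun x)^2"])
    show "integrable lborel (\<lambda>x. M^4 * (Dfun x)^2)"
      by (intro integrable_mult_right Dfun_sq_integrable)
    show "(\<lambda>x::real^3. norm (Hr \<alpha> f (norm x)) ^ 4) \<in> borel_measurable lborel"
      using h_cont[OF fX] by (auto intro!: borel_measurable_continuous_onI continuous_intros)
    show "AE x in lborel. norm (norm (Hr \<alpha> f (norm x)) ^ 4) \<le> norm (M^4 * (Dfun x)^2)"
      using AE_lborel_singleton[of 0]
    proof (rule eventually_mono)
      fix x :: "real^3" assume x: "x \<noteq> 0"
      define r where "r = norm x"
      have r: "r > 0" using x by (simp add: r_def)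
      have "norm (norm (Hr \<alpha> f r) ^ 4) = norm (Hr \<alpha> f r) ^ 4" by simp
      also have "\<dots> \<le> (M / (1 + r)) ^ 4"
        using M r by (intro power_mono) auto
      also have "\<dots> = M^4 * (1 / ((1+r)^2))^2" by (simp add: power_divide field_simps)
      also have "\<dots> \<le> M^4 * (1 / (r * (1+r)))^2"
        using r by (intro mult_left_mono power_mono divide_left_mono mult_right_mono mult_pos_pos)
                   (auto simp: power2_eq_square)
      also have "\<dots> = norm (M^4 * (Dfun x)^2)" by (simp add: Dfun_def r_def)
      finally show "norm (norm (Hr \<alpha> f (norm x)) ^ 4) \<le> norm (M^4 * (Dfun x)^2)" by (simp add: r_def)
    qed
  qed
  then show ?thesis unfolding Lp3_def using meas eq by simp
qed

end

context
  fixes f :: "real \<Rightarrow> complex" and \<alpha> :: real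
  assumes fX: "f \<in> X_space"
begin


lemma G_Lp2: "Gf \<alpha> f (axis j 1) \<in> Lp3 2"
proof -
  obtain A where A: "A \<ge> 0" "\<forall>\<epsilon>>0. \<forall>x. norm (due \<alpha> f \<epsilon> (axis j 1) x) \<le> A / (\<epsilon> * (1+\<epsilon>)) \<and>
      norm (due \<alpha> f \<epsilon> (axis j 1) x) \<le> A * Dfun x \<and> norm (Gf \<alpha> f (axis j 1) x) \<le> A * Dfun x"
    using due_bound[OF fX, of "axis j 1" \<alpha>] by auto
  have meas: "Gf \<alpha> f (axis j 1) \<in> borel_measurable lborel"
  proof (rule borel_measurable_LIMSEQ_metric[where f="\<lambda>n. due \<alpha> f (epsn n) (axis j 1)"])
    show "due \<alpha> f (epsn n) (axis j 1) \<in> borel_measurable lborel" for n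
      using due_cont[OF fX epsn_pos[of n]] by (simp add: borel_measurable_continuous_onI)
    show "(\<lambda>n. due \<alpha> f (epsn n) (axis j 1) x) \<longlonglongrightarrow> Gf \<alpha> f (axis j 1) x" for x
      by (rule due_tendsto[OF fX])
  qed
  have "integrable lborel (\<lambda>x. norm (Gf \<alpha> f (axis j 1) x) ^ 2)"
  proof (rule Bochner_Integration.integrable_bound[where f="\<lambda>x. A^2 * (Dfun x)^2"])
    show "integrable lborel (\<lambda>x. A^2 * (Dfun x)^2)"
      by (intro integrable_mult_right Dfun_sq_integrable)
    show "(\<lambda>x. norm (Gf \<alpha> f (axis j 1) x) ^ 2) \<in> borel_measurable lborel"
      using meas by measurable
    show "AE x in lborel. norm (norm (Gf \<alpha> f (axis j 1) x) ^ 2) \<le> norm (A^2 * (Dfun x)^2)"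
    proof (intro AE_I2)
      fix x :: "real^3"
      have "norm (Gf \<alpha> f (axis j 1) x) \<le> A * Dfun x" using A(2) epsn_pos[of 0] by blast
      then have "norm (Gf \<alpha> f (axis j 1) x) ^ 2 \<le> (A * Dfun x) ^ 2" by (intro power_mono) auto
      then show "norm (norm (Gf \<alpha> f (axis j 1) x) ^ 2) \<le> norm (A^2 * (Dfun x)^2)"
        by (simp add: power_mult_distrib)
    qed
  qed
  then show ?thesis unfolding Lp3_def using meas by simp
qed

lemma weak_deriv:
  assumes tf: "test_fun3 \<phi>"
  shows "integral\<^sup>L lborel (\<lambda>x. Hr \<alpha> f (norm x) * complex_of_real (frechet_derivative \<phi> (at x) (axis j 1)))
       = - integral\<^sup>L lborel (\<lambda>x. Gf \<alpha> f (axis j 1) x * complex_of_real (\<phi> x))"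
proof -
  define K where "K = closure {x. \<phi> x \<noteq> 0}"
  define d\<phi> where "d\<phi> = (\<lambda>x. frechet_derivative \<phi> (at x) (axis j 1))"
  define e :: "real^3" where "e = axis j 1"
  have c1: "continuous_on UNIV \<phi>" using test_fun_facts(1)[OF tf] .
  have c2: "continuous_on UNIV d\<phi>" unfolding d\<phi>_def using test_fun_facts(2)[OF tf, where j=j] .
  have cK: "compact K" unfolding K_def using test_fun_facts(3)[OF tf] .
  have z1: "\<And>x. x \<notin> K \<Longrightarrow> \<phi> x = 0" unfolding K_def using test_fun_facts(4)[OF tf] by blast
  have z2: "\<And>x. x \<notin> K \<Longrightarrow> d\<phi> x = 0" unfolding K_def d\<phi>_def using test_fun_facts(5)[OF tf, where j=j] by blast
  have ld: "\<And>x s. ((\<lambda>s. \<phi> (x + s *\<^sub>R e)) has_real_derivative d\<phi> (x + s *\<^sub>R e)) (at s)"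
    unfolding d\<phi>_def e_def using test_fun_facts(6)[OF tf, where j=j] by blast
  note tff = c1 c2 cK z1 z2 ld
  obtain M where M: "M \<ge> 0" "\<forall>\<epsilon>>0. \<forall>x. norm (ue \<alpha> f \<epsilon> x) \<le> M \<and> norm (Hr \<alpha> f (norm x)) \<le> M"
    using ue_bound[OF fX] by blast
  obtain A where A: "A \<ge> 0" "\<forall>\<epsilon>>0. \<forall>x. norm (due \<alpha> f \<epsilon> e x) \<le> A / (\<epsilon> * (1+\<epsilon>)) \<and>
      norm (due \<alpha> f \<epsilon> e x) \<le> A * Dfun x \<and> norm (Gf \<alpha> f e x) \<le> A * Dfun x"
    using due_bound[OF fX, of e \<alpha>] by (auto simp: e_def)
  have ibp: "integral\<^sup>L lborel (\<lambda>x. ue \<alpha> f (epsn n) x * complex_of_real (d\<phi> x))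
       = - integral\<^sup>L lborel (\<lambda>x. due \<alpha> f (epsn n) e x * complex_of_real (\<phi> x))" for n
  proof (rule ibp_line[where M=M and B="A / (epsn n * (1 + epsn n))" and K=K and e=e])
    show "continuous_on UNIV (ue \<alpha> f (epsn n))" by (rule ue_cont[OF fX epsn_pos])
    show "continuous_on UNIV (due \<alpha> f (epsn n) e)" by (rule due_cont[OF fX epsn_pos])
    show "norm (ue \<alpha> f (epsn n) x) \<le> M" for x using M epsn_pos[of n] by blast
    show "norm (due \<alpha> f (epsn n) e x) \<le> A / (epsn n * (1 + epsn n))" for x using A epsn_pos[of n] by blast
    show "((\<lambda>s. ue \<alpha> f (epsn n) (x + s *\<^sub>R e)) has_vector_derivative due \<alpha> f (epsn n) e (x + s *\<^sub>R e)) (at s)" for x s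
      by (rule ue_line_deriv[OF fX epsn_pos])
    show "continuous_on UNIV \<phi>" "continuous_on UNIV d\<phi>" "compact K"
      "\<And>x. x \<notin> K \<Longrightarrow> \<phi> x = 0" "\<And>x. x \<notin> K \<Longrightarrow> d\<phi> x = 0"
      using tff by auto
    show "((\<lambda>s. \<phi> (x + s *\<^sub>R e)) has_real_derivative d\<phi> (x + s *\<^sub>R e)) (at s)" for x s
      by (rule ld)
  qed
  have int_d\<phi>: "integrable lborel d\<phi>" using tff by (intro int_cs[OF _ tff(3)]) auto
  have int_\<phi>2: "integrable lborel (\<lambda>x. (\<phi> x)^2)" using tff by (intro int_cs[OF _ tff(3)]) (auto intro!: continuous_intros)
  have lim1: "(\<lambda>n. integral\<^sup>L lborel (\<lambda>x. ue \<alpha> f (epsn n) x * complex_of_real (d\<phi> x)))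
      \<longlonglongrightarrow> integral\<^sup>L lborel (\<lambda>x. Hr \<alpha> f (norm x) * complex_of_real (d\<phi> x))"
  proof (rule integral_dominated_convergence[where w="\<lambda>x. M * norm (d\<phi> x)"])
    show "(\<lambda>x. Hr \<alpha> f (norm x) * complex_of_real (d\<phi> x)) \<in> borel_measurable lborel"
      using h_cont[OF fX] tff(2) by (auto intro!: borel_measurable_continuous_onI continuous_intros)
    show "(\<lambda>x. ue \<alpha> f (epsn n) x * complex_of_real (d\<phi> x)) \<in> borel_measurable lborel" for n
      using ue_cont[OF fX epsn_pos[of n]] tff(2) by (auto intro!: borel_measurable_continuous_onI continuous_intros)
    show "integrable lborel (\<lambda>x. M * norm (d\<phi> x))" using int_d\<phi> by (intro integrable_mult_right integrable_norm)
    show "AE x in lborel. (\<lambda>n. ue \<alpha> f (epsn n) x * complex_of_real (d\<phi> x)) \<longlonglongrightarrow> Hr \<alpha> f (norm x) * complex_of_real (d\<phi> x)"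
      by (intro AE_I2 tendsto_intros ue_tendsto[OF fX])
    show "AE x in lborel. norm (ue \<alpha> f (epsn n) x * complex_of_real (d\<phi> x)) \<le> M * norm (d\<phi> x)" for n
    proof (intro AE_I2)
      fix x
      have "norm (ue \<alpha> f (epsn n) x) \<le> M" using M epsn_pos[of n] by blast
      then show "norm (ue \<alpha> f (epsn n) x * complex_of_real (d\<phi> x)) \<le> M * norm (d\<phi> x)"
        unfolding norm_mult norm_of_real real_norm_def by (rule mult_right_mono) auto
    qed
  qed
  have lim2: "(\<lambda>n. integral\<^sup>L lborel (\<lambda>x. due \<alpha> f (epsn n) e x * complex_of_real (\<phi> x)))
      \<longlonglongrightarrow> integral\<^sup>L lborel (\<lambda>x. Gf \<alpha> f e x * complex_of_real (\<phi> x))"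
  proof (rule integral_dominated_convergence[where w="\<lambda>x. A * ((Dfun x)^2 + (\<phi> x)^2)"])
    have mG: "Gf \<alpha> f e \<in> borel_measurable lborel"
      using G_Lp2[of j] unfolding Lp3_def e_def by simp
    show "(\<lambda>x. Gf \<alpha> f e x * complex_of_real (\<phi> x)) \<in> borel_measurable lborel"
    proof -
      have "(\<lambda>x. complex_of_real (\<phi> x)) \<in> borel_measurable lborel"
        using tff(1) by (auto intro!: borel_measurable_continuous_onI continuous_intros)
      then show ?thesis using mG by measurable
    qed
    show "(\<lambda>x. due \<alpha> f (epsn n) e x * complex_of_real (\<phi> x)) \<in> borel_measurable lborel" for n
      using due_cont[OF fX epsn_pos[of n]] tff(1) by (auto intro!: borel_measurable_continuous_onI continuous_intros)
    show "integrable lborel (\<lambda>x. A * ((Dfun x)^2 + (\<phi> x)^2))"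
      by (intro integrable_mult_right Bochner_Integration.integrable_add int_\<phi>2 Dfun_sq_integrable)
    show "AE x in lborel. (\<lambda>n. due \<alpha> f (epsn n) e x * complex_of_real (\<phi> x)) \<longlonglongrightarrow> Gf \<alpha> f e x * complex_of_real (\<phi> x)"
      by (intro AE_I2 tendsto_intros due_tendsto[OF fX])
    show "AE x in lborel. norm (due \<alpha> f (epsn n) e x * complex_of_real (\<phi> x)) \<le> A * ((Dfun x)^2 + (\<phi> x)^2)" for n
    proof (intro AE_I2)
      fix x
      have a: "norm (due \<alpha> f (epsn n) e x) \<le> A * Dfun x" using A epsn_pos[of n] by blast
      have "norm (due \<alpha> f (epsn n) e x * complex_of_real (\<phi> x)) \<le> (A * Dfun x) * \<bar>\<phi> x\<bar>"
        unfolding norm_mult norm_of_real using a by (rule mult_right_mono) auto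
      also have "\<dots> = A * (Dfun x * \<bar>\<phi> x\<bar>)" by simp
      also have "\<dots> \<le> A * ((Dfun x)^2 + (\<phi> x)^2)"
      proof (intro mult_left_mono A(1))
        have "0 \<le> (Dfun x - \<bar>\<phi> x\<bar>)^2" by simp
        then show "Dfun x * \<bar>\<phi> x\<bar> \<le> (Dfun x)^2 + (\<phi> x)^2"
        proof -
          have e: "(Dfun x - \<bar>\<phi> x\<bar>)^2 = (Dfun x)^2 - 2*(Dfun x*\<bar>\<phi> x\<bar>) + (\<phi> x)^2"
            by (simp add: power2_diff)
          have p: "0 \<le> Dfun x*\<bar>\<phi> x\<bar>" using Dfun_nonneg[of x] by simp
          show ?thesis using e p \<open>0 \<le> (Dfun x - \<bar>\<phi> x\<bar>)^2\<close> by linarith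
        qed
      qed
      finally show "norm (due \<alpha> f (epsn n) e x * complex_of_real (\<phi> x)) \<le> A * ((Dfun x)^2 + (\<phi> x)^2)" .
    qed
  qed
  have "(\<lambda>n. integral\<^sup>L lborel (\<lambda>x. ue \<alpha> f (epsn n) x * complex_of_real (d\<phi> x)))
      \<longlonglongrightarrow> - integral\<^sup>L lborel (\<lambda>x. Gf \<alpha> f e x * complex_of_real (\<phi> x))"
    unfolding ibp by (rule tendsto_minus[OF lim2])
  from LIMSEQ_unique[OF lim1 this] show ?thesis unfolding d\<phi>_def e_def .
qed

lemma h_Hdot: "(\<lambda>x::real^3. Hr \<alpha> f (norm x)) \<in> Hdot1_3"
proof -
  have meas: "(\<lambda>x::real^3. Hr \<alpha> f (norm x)) \<in> borel_measurable lborel"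
    using h_cont[OF fX] by (simp add: borel_measurable_continuous_onI)
  have loc: "set_integrable lborel K (\<lambda>x::real^3. Hr \<alpha> f (norm x))" if "compact K" for K
    unfolding set_integrable_def using that h_cont[OF fX]
    by (intro borel_integrable_compact) (auto intro: continuous_on_subset)
  show ?thesis unfolding Hdot1_3_def
    using meas loc G_Lp2 weak_deriv by (intro CollectI conjI allI exI[of _ "\<lambda>j. Gf \<alpha> f (axis j 1)"] impI) auto
qed

end

theorem lemma9p5:
  fixes f :: "real \<Rightarrow> complex" and \<alpha> :: real
  assumes "f \<in> X_space" and "\<alpha> \<noteq> 0"
  defines "h \<equiv> (\<lambda>x::real^3. cpow_weight \<alpha> (norm x) * f ((norm x - 1) / (norm x + 1)))"
  shows "h \<in> Lp3 4 \<inter> Hdot1_3"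
proof -
  have eq: "h = (\<lambda>x::real^3. Hr \<alpha> f (norm x))" unfolding h_def Hr_def by simp
  show ?thesis unfolding eq using h_Lp4[OF assms(1)] h_Hdot[OF assms(1)] by simp
qed

end
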